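(* For every $n\ge1$, the set $F_n$ is full. Equivalently, the $(5n+3)\times(5n+3)$ matrix $M_n$ is invertible.
   Context: Let $X_1,X_2,X_3$ be pairwise disjoint nonempty sets and $\Omega=X_1\times X_2\times X_3$, with projections $\Pi_i:\Omega\to X_i$. A set $S\subset\Omega$ is good if every function $f:S\to\mathbb C$ can be written $f(w_1,w_2,w_3)=u_1(w_1)+u_2(w_2)+u_3(w_3)$ for all $(w_1,w_2,w_3)\in S$, for some functions $u_i:X_i\to\mathbb C$. A set $S$ is full if it is a maximal good subset of $\Pi_1S\times\Pi_2S\times\Pi_3S$. Construction: fix pairwise distinct elements $x_1,y_1,\alpha_{5k-4},\alpha_{5k-1}$ ($k\ge1$) of $X_1$; pairwise distinct elements $x_2,y_2,\alpha_{5k-3},\alpha_{5k}$ ($k\ge1$) of $X_2$; pairwise distinct elements $x_3,z_3,\alpha_{5k-2}$ ($k\ge1$) of $X_3$. Set the convention $\alpha_{-3}:=y_2$, $\alpha_{-2}:=z_3$. Define $a_1=(x_1,x_2,x_3)$, $a_2=(y_1,y_2,x_3)$, $a_3=(y_1,x_2,z_3)$ and for $n\ge1$: $a_{5n-1}=(\alpha_{5n-4},\alpha_{5n-3},\alpha_{5n-2})$, $a_{5n}=(\alpha_{5n-1},\alpha_{5n},\alpha_{5n-2})$, $a_{5n+1}=(\alpha_{5n-4},\alpha_{5n},\alpha_{5n-7})$, $a_{5n+2}=(\alpha_{5n-1},\alpha_{5n-3},x_3)$, $a_{5n+3}=(x_1,\alpha_{5n-8},\alpha_{5n-2})$. Let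 $D_n=\{a_1,\dots,a_{5n+3}\}$, $b_n=(\alpha_{5n-1},y_2,z_3)$ and $F_n=D_n\cup\{b_n\}$. Let $M_n$ be the $0$–$1$ matrix whose rows are indexed by the points $a_2,a_3,\dots,a_{5n+3},b_n$ (in this order) and whose columns are indexed by $y_1,y_2,z_3,\alpha_1,\alpha_2,\dots,\alpha_{5n}$ (in this order), the entry being $1$ exactly when the column element is a coordinate of the row point. *)

theory Defs
  imports Complex_Main
begin

definition good :: "'a set \<Rightarrow> 'a set \<Rightarrow> 'a set \<Rightarrow> ('a \<times> 'a \<times> 'a) set \<Rightarrow> bool" where
  "good X1 X2 X3 S \<longleftrightarrow> S \<subseteq> X1 \<times> X2 \<times> X3 \<and>
     (\<forall>f :: 'a \<times> 'a \<times> 'a \<Rightarrow> complex. \<exists>u1 u2 u3 :: 'a \<Rightarrow> complex.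
        \<forall>(w1, w2, w3) \<in> S. f (w1, w2, w3) = u1 w1 + u2 w2 + u3 w3)"

definition full :: "'a set \<Rightarrow> 'a set \<Rightarrow> 'a set \<Rightarrow> ('a \<times> 'a \<times> 'a) set \<Rightarrow> bool" where
  "full X1 X2 X3 S \<longleftrightarrow> good X1 X2 X3 S \<and>
     (\<forall>T. S \<subset> T \<and> T \<subseteq> fst ` S \<times> (fst \<circ> snd) ` S \<times> (snd \<circ> snd) ` S \<longrightarrow> \<not> good X1 X2 X3 T)"

definition al :: "(nat \<Rightarrow> 'a) \<Rightarrow> 'a \<Rightarrow> 'a \<Rightarrow> int \<Rightarrow> 'a" where
  "al \<alpha> y2 z3 i = (if i = -3 then y2 else if i = -2 then z3 else \<alpha> (nat i))"

text \<open>Block k (k >= 1): the points a(5k-1), a(5k), a(5k+1), a(5k+2), a(5k+3).\<close>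
definition blk :: "'a \<Rightarrow> 'a \<Rightarrow> 'a \<Rightarrow> 'a \<Rightarrow> (nat \<Rightarrow> 'a) \<Rightarrow> nat \<Rightarrow> ('a \<times> 'a \<times> 'a) set" where
  "blk x1 x3 y2 z3 \<alpha> k = (let A = al \<alpha> y2 z3; m = int k in
     {(A (5*m-4), A (5*m-3), A (5*m-2)),
      (A (5*m-1), A (5*m), A (5*m-2)),
      (A (5*m-4), A (5*m), A (5*m-7)),
      (A (5*m-1), A (5*m-3), x3),
      (x1, A (5*m-8), A (5*m-2))})"

definition Dset :: "'a \<Rightarrow> 'a \<Rightarrow> 'a \<Rightarrow> 'a \<Rightarrow> 'a \<Rightarrow> 'a \<Rightarrow> (nat \<Rightarrow> 'a) \<Rightarrow> nat \<Rightarrow> ('a \<times> 'a \<times> 'a) set" where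
  "Dset x1 y1 x2 y2 x3 z3 \<alpha> n =
     {(x1, x2, x3), (y1, y2, x3), (y1, x2, z3)} \<union> (\<Union>k\<in>{1..n}. blk x1 x3 y2 z3 \<alpha> k)"

definition Fset :: "'a \<Rightarrow> 'a \<Rightarrow> 'a \<Rightarrow> 'a \<Rightarrow> 'a \<Rightarrow> 'a \<Rightarrow> (nat \<Rightarrow> 'a) \<Rightarrow> nat \<Rightarrow> ('a \<times> 'a \<times> 'a) set" where
  "Fset x1 y1 x2 y2 x3 z3 \<alpha> n = insert (\<alpha> (5*n-1), y2, z3) (Dset x1 y1 x2 y2 x3 z3 \<alpha> n)"

end

theory Submission
  imports Defs
begin
primrec bcr :: "complex \<times> complex \<Rightarrow> (nat \<Rightarrow> complex) \<Rightarrow> (nat \<Rightarrow> complex) \<Rightarrow> complex \<Rightarrow> nat \<Rightarrow> nat \<Rightarrow> complex \<times> complex" where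
  "bcr i g R fin n 0 = i"
| "bcr i g R fin n (Suc k) = (let c = g (Suc k) - fst (bcr i g R fin n k) in (if Suc k < n then (R (Suc (Suc k)) - c)/2 else fin, c))"

lemma modfacts: assumes "k \<ge> (1::nat)" shows "(5*k-4) mod 5 = 1" "(5*k-1) mod 5 = 4" "(5*k) mod 5 = 0"
  "(5*k-3) mod 5 = 2" "(5*k-2) mod 5 = 3"
proof -
  obtain m where k: "k = Suc m" using assms by (cases k) auto
  have "5*k-4 = 1 + 5*m" "5*k-1 = 4 + 5*m" "5*k-3 = 2+5*m" "5*k-2 = 3+5*m" using k by simp_all
  thus "(5*k-4) mod 5 = 1" "(5*k-1) mod 5 = 4" "(5*k) mod 5 = 0"
  "(5*k-3) mod 5 = 2" "(5*k-2) mod 5 = 3" by (simp_all add: mod_Suc)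
qed

definition Bf :: "'a \<Rightarrow> (nat\<Rightarrow>'a) \<Rightarrow> nat \<Rightarrow> 'a" where "Bf y2 \<alpha> k = (if k=0 then y2 else \<alpha>(5*k-3))"
definition Cf :: "'a \<Rightarrow> (nat\<Rightarrow>'a) \<Rightarrow> nat \<Rightarrow> 'a" where "Cf z3 \<alpha> k = (if k=0 then z3 else \<alpha>(5*k-2))"

lemma blk_eq:
  assumes "k \<ge> 1"
  shows "blk x1 x3 y2 z3 \<alpha> k = {(\<alpha>(5*k-4), Bf y2 \<alpha> k, Cf z3 \<alpha> k), (\<alpha>(5*k-1), \<alpha>(5*k), Cf z3 \<alpha> k),
     (\<alpha>(5*k-4), \<alpha>(5*k), Cf z3 \<alpha> (k-1)), (\<alpha>(5*k-1), Bf y2 \<alpha> k, x3), (x1, Bf y2 \<alpha> (k-1), Cf z3 \<alpha> k)}"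
proof -
  have e: "nat (5*int k - 4) = 5*k-4" "nat (5*int k - 3) = 5*k-3" "nat (5*int k - 2) = 5*k-2"
     "nat (5*int k - 1) = 5*k-1" "nat (5*int k) = 5*k" using assms by auto
  have ne: "5*int k - j \<noteq> -3" "5*int k - j \<noteq> -2" if "j \<le> 4" for j using assms that by auto
  show ?thesis
  proof (cases "k = 1")
    case True thus ?thesis by (simp add: blk_def Let_def al_def Bf_def Cf_def)
  next
    case False
    hence k2: "k \<ge> 2" using assms by auto
    have e2: "nat (5*int k - 7) = 5*(k-1)-2" "nat (5*int k - 8) = 5*(k-1)-3"
       "5*int k - 7 \<noteq> -3" "5*int k - 7 \<noteq> -2" "5*int k - 8 \<noteq> -3" "5*int k - 8 \<noteq> -2" using k2 by auto
    show ?thesis using k2 e e2 ne[of 4] ne[of 3] ne[of 2] ne[of 1] ne[of 0]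
      by (simp add: blk_def Let_def al_def Bf_def Cf_def)
  qed
qed

theorem mainTheorem6:
  fixes X1 X2 X3 :: "'a set" and x1 y1 x2 y2 x3 z3 :: 'a and \<alpha> :: "nat \<Rightarrow> 'a" and n :: nat
  assumes disj: "X1 \<inter> X2 = {}" "X1 \<inter> X3 = {}" "X2 \<inter> X3 = {}"
    and ne: "X1 \<noteq> {}" "X2 \<noteq> {}" "X3 \<noteq> {}"
    and mem: "x1 \<in> X1" "y1 \<in> X1" "x2 \<in> X2" "y2 \<in> X2" "x3 \<in> X3" "z3 \<in> X3"
    and mem\<alpha>1: "\<And>k. k \<ge> 1 \<Longrightarrow> \<alpha> (5*k-4) \<in> X1 \<and> \<alpha> (5*k-1) \<in> X1"
    and mem\<alpha>2: "\<And>k. k \<ge> 1 \<Longrightarrow> \<alpha> (5*k-3) \<in> X2 \<and> \<alpha> (5*k) \<in> X2"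
    and mem\<alpha>3: "\<And>k. k \<ge> 1 \<Longrightarrow> \<alpha> (5*k-2) \<in> X3"
    and dist: "x1 \<noteq> y1" "x2 \<noteq> y2" "x3 \<noteq> z3"
    and inj: "inj_on \<alpha> {1..}"
    and notin: "x1 \<notin> \<alpha> ` {1..}" "y1 \<notin> \<alpha> ` {1..}" "x2 \<notin> \<alpha> ` {1..}"
               "y2 \<notin> \<alpha> ` {1..}" "x3 \<notin> \<alpha> ` {1..}" "z3 \<notin> \<alpha> ` {1..}"
    and n: "n \<ge> 1"
  shows "full X1 X2 X3 (Fset x1 y1 x2 y2 x3 z3 \<alpha> n)"
proof -
  let ?S = "Fset x1 y1 x2 y2 x3 z3 \<alpha> n"
  define B where "B = Bf y2 \<alpha>"
  define C where "C = Cf z3 \<alpha>"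
  have B0: "B 0 = y2" and C0: "C 0 = z3" by (simp_all add: B_def C_def Bf_def Cf_def)
  have Bk: "k \<ge> 1 \<Longrightarrow> B k = \<alpha> (5*k-3)" and Ck: "k \<ge> 1 \<Longrightarrow> C k = \<alpha> (5*k-2)" for k
    by (simp_all add: B_def C_def Bf_def Cf_def)
  have memS: "s \<in> ?S \<longleftrightarrow> s = (\<alpha>(5*n-1), y2, z3) \<or> s = (x1,x2,x3) \<or> s = (y1,y2,x3) \<or> s = (y1,x2,z3) \<or>
     (\<exists>k. 1 \<le> k \<and> k \<le> n \<and> (s = (\<alpha>(5*k-4), B k, C k) \<or> s = (\<alpha>(5*k-1), \<alpha>(5*k), C k) \<or>
        s = (\<alpha>(5*k-4), \<alpha>(5*k), C (k-1)) \<or> s = (\<alpha>(5*k-1), B k, x3) \<or> s = (x1, B (k-1), C k)))" for s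
  proof -
    have "s \<in> (\<Union>k\<in>{1..n}. blk x1 x3 y2 z3 \<alpha> k) \<longleftrightarrow> (\<exists>k. 1 \<le> k \<and> k \<le> n \<and> (s = (\<alpha>(5*k-4), B k, C k) \<or> s = (\<alpha>(5*k-1), \<alpha>(5*k), C k) \<or>
        s = (\<alpha>(5*k-4), \<alpha>(5*k), C (k-1)) \<or> s = (\<alpha>(5*k-1), B k, x3) \<or> s = (x1, B (k-1), C k)))"
    proof -
      have "(\<Union>k\<in>{1..n}. blk x1 x3 y2 z3 \<alpha> k) = (\<Union>k\<in>{1..n}. {(\<alpha>(5*k-4), B k, C k), (\<alpha>(5*k-1), \<alpha>(5*k), C k),
        (\<alpha>(5*k-4), \<alpha>(5*k), C (k-1)), (\<alpha>(5*k-1), B k, x3), (x1, B (k-1), C k)})"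
        unfolding B_def C_def by (rule SUP_cong) (auto simp: blk_eq)
      thus ?thesis by auto
    qed
    thus ?thesis unfolding Fset_def Dset_def by auto
  qed
  have memS2: "(\<exists>k. 1 \<le> k \<and> k \<le> n \<and> (s = (\<alpha>(5*k-4), B k, C k) \<or> s = (\<alpha>(5*k-1), \<alpha>(5*k), C k) \<or>
        s = (\<alpha>(5*k-4), \<alpha>(5*k), C (k-1)) \<or> s = (\<alpha>(5*k-1), B k, x3) \<or> s = (x1, B (k-1), C k))) \<Longrightarrow> s \<in> ?S" for s
    by (subst memS) (rule disjI2, rule disjI2, rule disjI2, rule disjI2)
  have BX2: "B k \<in> X2" and CX3: "C k \<in> X3" for k
    using mem mem\<alpha>2 mem\<alpha>3 by (auto simp: B_def C_def Bf_def Cf_def)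
  have sub: "?S \<subseteq> X1 \<times> X2 \<times> X3"
  proof
    fix s assume "s \<in> ?S"
    thus "s \<in> X1 \<times> X2 \<times> X3" unfolding memS using mem mem\<alpha>1 mem\<alpha>2 mem\<alpha>3 BX2 CX3 n by auto
  qed
  have dA: "\<alpha> j \<noteq> x1 \<and> \<alpha> j \<noteq> y1 \<and> \<alpha> j \<noteq> x2 \<and> \<alpha> j \<noteq> y2 \<and> \<alpha> j \<noteq> x3 \<and> \<alpha> j \<noteq> z3" if "j \<ge> 1" for j
    using notin that by force
  have d6: "x2 \<noteq> x1" "x3 \<noteq> x1" "x3 \<noteq> x2" "y1 \<noteq> x1" "y1 \<noteq> x2" "y1 \<noteq> x3"
     "y2 \<noteq> x1" "y2 \<noteq> x2" "y2 \<noteq> x3" "y2 \<noteq> y1" "z3 \<noteq> x1" "z3 \<noteq> x2" "z3 \<noteq> x3" "z3 \<noteq> y1" "z3 \<noteq> y2"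
    using mem disj dist by auto
  have good: "good X1 X2 X3 ?S"
    unfolding good_def
  proof (intro conjI sub allI)
    fix f :: "'a \<times> 'a \<times> 'a \<Rightarrow> complex"
    define fp1 where "fp1 k = f (\<alpha>(5*k-4), B k, C k)" for k
    define fp2 where "fp2 k = f (\<alpha>(5*k-1), \<alpha>(5*k), C k)" for k
    define fp3 where "fp3 k = f (\<alpha>(5*k-4), \<alpha>(5*k), C (k-1))" for k
    define fp4 where "fp4 k = f (\<alpha>(5*k-1), B k, x3)" for k
    define fp5 where "fp5 k = f (x1, B (k-1), C k)" for k
    define X3v where "X3v = f (x1,x2,x3)"
    define F2 where "F2 = f (y1,y2,x3)"
    define F3 where "F3 = f (y1,x2,z3)"
    define fb where "fb = f (\<alpha>(5*n-1), y2, z3)"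
    define R where "R k = fp3 k + fp4 k - X3v - fp1 k - fp2 k + 2 * fp5 k" for k
    define Y2 where "Y2 = (R 1 - F3 + F2 - X3v) / 3"
    define Z3 where "Z3 = Y2 + F3 - F2 + X3v"
    define Y1 where "Y1 = F2 - Y2 - X3v"
    define fin where "fin = fp4 n - X3v - (fb - Y2 - Z3)"
    define bb where "bb k = fst (bcr (Y2, Z3) fp5 R fin n k)" for k
    define cc where "cc k = snd (bcr (Y2, Z3) fp5 R fin n k)" for k
    define aa where "aa k = fp1 k - cc k - bb k" for k
    define dd where "dd k = fp4 k - X3v - bb k" for k
    define ee where "ee k = fp2 k - cc k - dd k" for k
    define Vf where "Vf j = (let k = (j+4) div 5 in if j mod 5 = 1 then aa k else if j mod 5 = 2 then bb k
       else if j mod 5 = 3 then cc k else if j mod 5 = 4 then dd k else ee k)" for j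
    define U where "U w = (if w = x1 then 0 else if w = x2 then 0 else if w = x3 then X3v else if w = y1 then Y1
       else if w = y2 then Y2 else if w = z3 then Z3 else Vf (inv_into {1..} \<alpha> w))" for w
    have bb0: "bb 0 = Y2" and cc0: "cc 0 = Z3" by (simp_all add: bb_def cc_def)
    have ccS: "k \<ge> 1 \<Longrightarrow> cc k = fp5 k - bb (k-1)" for k
      by (cases k) (simp_all add: bb_def cc_def Let_def)
    have bbS: "k \<ge> 1 \<Longrightarrow> bb k = (if k < n then (R (k+1) - cc k)/2 else fin)" for k
      by (cases k) (simp_all add: bb_def cc_def Let_def)
    have cons: "2 * bb (k-1) + cc (k-1) = R k" if "1 \<le> k" "k \<le> n" for k
    proof (cases "k = 1")
      case True thus ?thesis by (simp add: bb0 cc0 Z3_def Y2_def field_simps)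
    next
      case False
      hence "k - 1 \<ge> 1" "k - 1 < n" using that by auto
      from bbS[OF this(1)] this(2) that False show ?thesis by (simp add: field_simps)
    qed
    have Ua: "U (\<alpha> j) = Vf j" if "j \<ge> 1" for j
    proof -
      have "inv_into {1..} \<alpha> (\<alpha> j) = j" using inv_into_f_f[OF inj] that by simp
      thus ?thesis using dA[OF that] by (simp add: U_def)
    qed
    have Ux: "U x1 = 0" "U x2 = 0" "U x3 = X3v" "U y1 = Y1" "U y2 = Y2" "U z3 = Z3"
      using d6 by (simp_all add: U_def)
    have Ublk: "U (\<alpha>(5*k-4)) = aa k" "U (\<alpha>(5*k-1)) = dd k" "U (\<alpha>(5*k)) = ee k" if "k \<ge> 1" for k
    proof -
      have "(5*k-4+4) div 5 = k" "(5*k-1+4) div 5 = k" "(5*k+4) div 5 = k" using that by simp_all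
      moreover have "(5*k-4) mod 5 = 1" "(5*k-1) mod 5 = 4" "(5*k) mod 5 = 0" using modfacts[OF that] by simp_all
      ultimately show "U (\<alpha>(5*k-4)) = aa k" "U (\<alpha>(5*k-1)) = dd k" "U (\<alpha>(5*k)) = ee k"
        using that by (subst Ua, simp, simp add: Vf_def Let_def)+
    qed
    have UB: "U (B k) = bb k" and UC: "U (C k) = cc k" for k
    proof -
      show "U (B k) = bb k"
      proof (cases "k = 0")
        case True thus ?thesis by (simp add: B0 Ux bb0)
      next
        case False
        hence "(5*k-3+4) div 5 = k" by simp
        moreover have "(5*k-3) mod 5 = 2" using modfacts False by simp
        ultimately show ?thesis using False by (simp add: Bk Ua Vf_def Let_def)
      qed
      show "U (C k) = cc k"
      proof (cases "k = 0")
        case True thus ?thesis by (simp add: C0 Ux cc0)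
      next
        case False
        hence "(5*k-2+4) div 5 = k" by simp
        moreover have "(5*k-2) mod 5 = 3" using modfacts False by simp
        ultimately show ?thesis using False by (simp add: Ck Ua Vf_def Let_def)
      qed
    qed
    have eqs: "f s = U (fst s) + U (fst (snd s)) + U (snd (snd s))" if "s \<in> ?S" for s
    proof -
      from that[unfolded memS] consider "s = (\<alpha>(5*n-1), y2, z3)" | "s = (x1,x2,x3)" | "s = (y1,y2,x3)" | "s = (y1,x2,z3)" |
        k where "1 \<le> k" "k \<le> n" "s = (\<alpha>(5*k-4), B k, C k) \<or> s = (\<alpha>(5*k-1), \<alpha>(5*k), C k) \<or>
        s = (\<alpha>(5*k-4), \<alpha>(5*k), C (k-1)) \<or> s = (\<alpha>(5*k-1), B k, x3) \<or> s = (x1, B (k-1), C k)" by blast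
      then show ?thesis
      proof cases
        assume "s = (\<alpha>(5*n-1), y2, z3)"
        moreover have "dd n = fb - Y2 - Z3" using bbS[OF n] by (simp add: dd_def fin_def)
        ultimately show ?thesis using Ublk(2)[OF n] Ux by (simp add: fb_def)
      next
        assume "s = (x1,x2,x3)" thus ?thesis using Ux by (simp add: X3v_def)
      next
        assume "s = (y1,y2,x3)" thus ?thesis using Ux by (simp add: Y1_def F2_def)
      next
        assume "s = (y1,x2,z3)" thus ?thesis using Ux by (simp add: Y1_def Z3_def F3_def)
      next
        fix k assume k: "1 \<le> k" "k \<le> n"
          and h: "s = (\<alpha>(5*k-4), B k, C k) \<or> s = (\<alpha>(5*k-1), \<alpha>(5*k), C k) \<or>
        s = (\<alpha>(5*k-4), \<alpha>(5*k), C (k-1)) \<or> s = (\<alpha>(5*k-1), B k, x3) \<or> s = (x1, B (k-1), C k)"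
        note U = Ublk[OF k(1)] UB UC Ux
        have c: "cc k = fp5 k - bb (k-1)" using ccS k by simp
        have cs: "2 * bb (k-1) + cc (k-1) = R k" using cons k by simp
        have e3: "aa k + ee k + cc (k-1) = fp3 k"
        proof -
          have cs': "cc (k-1) = R k - 2 * bb (k-1)" using cs by (simp add: algebra_simps)
          show ?thesis unfolding aa_def ee_def dd_def cs' c R_def by (simp add: algebra_simps)
        qed
        from h show ?thesis
        proof (elim disjE)
          assume "s = (\<alpha>(5*k-4), B k, C k)" thus ?thesis using U by (simp add: aa_def fp1_def)
        next
          assume "s = (\<alpha>(5*k-1), \<alpha>(5*k), C k)" thus ?thesis using U by (simp add: ee_def fp2_def)
        next
          assume "s = (\<alpha>(5*k-4), \<alpha>(5*k), C (k-1))"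
          thus ?thesis using U e3 by (simp add: fp3_def)
        next
          assume "s = (\<alpha>(5*k-1), B k, x3)" thus ?thesis using U by (simp add: dd_def fp4_def)
        next
          assume "s = (x1, B (k-1), C k)" thus ?thesis using U c by (simp add: fp5_def)
        qed
      qed
    qed
    show "\<exists>u1 u2 u3 :: 'a \<Rightarrow> complex. \<forall>(w1, w2, w3) \<in> ?S. f (w1, w2, w3) = u1 w1 + u2 w2 + u3 w3"
      by (rule exI[of _ U], rule exI[of _ U], rule exI[of _ U]) (use eqs in auto)
  qed
  show ?thesis unfolding full_def
  proof (intro conjI good allI impI notI)
    fix T assume T: "?S \<subset> T \<and> T \<subseteq> fst ` ?S \<times> (fst \<circ> snd) ` ?S \<times> (snd \<circ> snd) ` ?S"
      and gT: "good X1 X2 X3 T"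
    obtain t where t: "t \<in> T" "t \<notin> ?S" using T by blast
    define f where "f w = (if w = t then 1 else (0::complex))" for w :: "'a\<times>'a\<times>'a"
    from gT obtain u1 u2 u3 :: "'a \<Rightarrow> complex" where
      u: "\<forall>(w1,w2,w3)\<in>T. f (w1,w2,w3) = u1 w1 + u2 w2 + u3 w3" unfolding good_def by blast
    have z: "u1 w1 + u2 w2 + u3 w3 = 0" if "(w1,w2,w3) \<in> ?S" for w1 w2 w3
    proof -
      have "(w1,w2,w3) \<in> T" using that T by blast
      moreover have "(w1,w2,w3) \<noteq> t" using that t(2) by blast
      ultimately
      show ?thesis using u by (auto simp: f_def)
    qed
    have one: "u1 (fst t) + u2 (fst (snd t)) + u3 (snd (snd t)) = 1"
      using u t(1) by (cases t) (auto simp: f_def)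
    define p where "p w = u1 w - u1 x1" for w
    define q where "q w = u2 w - u2 x2" for w
    define r where "r w = u3 w - u3 x3" for w
    have a1: "u1 x1 + u2 x2 + u3 x3 = 0" using z[of x1 x2 x3] by (simp add: memS)
    have zz: "p w1 + q w2 + r w3 = 0" if "(w1,w2,w3) \<in> ?S" for w1 w2 w3
    proof -
      have "p w1 + q w2 + r w3 = (u1 w1+u2 w2+u3 w3) - (u1 x1+u2 x2+u3 x3)" by (simp add: p_def q_def r_def algebra_simps)
      thus ?thesis using z[OF that] a1 by simp
    qed
    have px: "p x1 = 0" "q x2 = 0" "r x3 = 0" by (simp_all add: p_def q_def r_def)
    have E2: "p y1 + q y2 = 0" using zz[of y1 y2 x3] px memS by simp
    have E3: "p y1 + r z3 = 0" using zz[of y1 x2 z3] px memS by simp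
    have eb: "p (\<alpha>(5*n-1)) + q y2 + r z3 = 0" using zz[of "\<alpha>(5*n-1)" y2 z3] memS by simp
    have blkS: "(\<alpha>(5*k-4), B k, C k) \<in> ?S" "(\<alpha>(5*k-1), \<alpha>(5*k), C k) \<in> ?S"
      "(\<alpha>(5*k-4), \<alpha>(5*k), C (k-1)) \<in> ?S" "(\<alpha>(5*k-1), B k, x3) \<in> ?S" "(x1, B (k-1), C k) \<in> ?S"
      if "1 \<le> k" "k \<le> n" for k
      by (rule memS2, rule exI[of _ k], use that in simp)+
    have e1: "p (\<alpha>(5*k-4)) + q (B k) + r (C k) = 0"
     and e2: "p (\<alpha>(5*k-1)) + q (\<alpha>(5*k)) + r (C k) = 0"
     and e3: "p (\<alpha>(5*k-4)) + q (\<alpha>(5*k)) + r (C (k-1)) = 0"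
     and e4: "p (\<alpha>(5*k-1)) + q (B k) = 0"
     and e5: "q (B (k-1)) + r (C k) = 0" if "1 \<le> k" "k \<le> n" for k
      using zz[OF blkS(1)[OF that]] zz[OF blkS(2)[OF that]] zz[OF blkS(3)[OF that]]
        zz[OF blkS(4)[OF that]] zz[OF blkS(5)[OF that]] px by simp_all
    have consq: "2 * q (B (k-1)) + r (C (k-1)) = 0" if "1 \<le> k" "k \<le> n" for k
    proof -
      have "2 * r (C k) - r (C (k-1)) = (p (\<alpha>(5*k-4)) + q (B k) + r (C k)) + (p (\<alpha>(5*k-1)) + q (\<alpha>(5*k)) + r (C k))
         - (p (\<alpha>(5*k-4)) + q (\<alpha>(5*k)) + r (C (k-1))) - (p (\<alpha>(5*k-1)) + q (B k))" by (simp add: algebra_simps)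
      also have "\<dots> = 0" unfolding e1[OF that] e2[OF that] e3[OF that] e4[OF that] by simp
      finally have "2 * r (C k) - r (C (k-1)) = 0" .
      moreover have h2: "r (C k) = - q (B (k-1))" using e5[OF that] by (metis add.commute eq_neg_iff_add_eq_0)
      moreover have "2 * q (B (k-1)) + r (C (k-1)) = -(2 * r (C k) - r (C (k-1)))" unfolding h2 by (simp add: algebra_simps)
      ultimately show ?thesis by simp
    qed
    have ind: "j < n \<longrightarrow> q (B j) = 0 \<and> r (C j) = 0" for j
    proof (induction j)
      case 0
      have "r z3 = (p y1 + r z3) - (p y1 + q y2) + q y2" by (simp add: algebra_simps)
      hence "r z3 = q y2" unfolding E2 E3 by simp
      moreover have "2 * q y2 + r z3 = 0" using consq[of 1] n by (simp add: B0 C0)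
      ultimately show ?case by (simp add: B0 C0)
    next
      case (Suc i)
      show ?case
      proof
        assume "Suc i < n"
        hence "q (B i) = 0" using Suc by simp
        hence rc: "r (C (Suc i)) = 0" using e5[of "Suc i"] \<open>Suc i < n\<close> by simp
        have "2 * q (B (Suc i)) + r (C (Suc i)) = 0" using consq[of "Suc (Suc i)"] \<open>Suc i < n\<close> by simp
        with rc show "q (B (Suc i)) = 0 \<and> r (C (Suc i)) = 0" by simp
      qed
    qed
    have q0: "q y2 = 0" and r0: "r z3 = 0" using ind[of 0] n by (simp_all add: B0 C0)
    have rCn: "r (C n) = 0" using e5[of n] ind[of "n-1"] n by simp
    have pdn: "p (\<alpha>(5*n-1)) = 0" using eb q0 r0 by simp
    have qBn: "q (B n) = 0" using e4[of n] n pdn by simp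
    have QR: "q (B k) = 0 \<and> r (C k) = 0" if "k \<le> n" for k
      using that ind[of k] rCn qBn by (cases "k = n") auto
    have py1: "p y1 = 0" using E2 q0 by simp
    have allz: "p (fst s) = 0 \<and> q (fst (snd s)) = 0 \<and> r (snd (snd s)) = 0" if "s \<in> ?S" for s
    proof -
      from that[unfolded memS] consider "s = (\<alpha>(5*n-1), y2, z3)" | "s = (x1,x2,x3)" | "s = (y1,y2,x3)" | "s = (y1,x2,z3)" |
        k where "1 \<le> k" "k \<le> n" "s = (\<alpha>(5*k-4), B k, C k) \<or> s = (\<alpha>(5*k-1), \<alpha>(5*k), C k) \<or>
        s = (\<alpha>(5*k-4), \<alpha>(5*k), C (k-1)) \<or> s = (\<alpha>(5*k-1), B k, x3) \<or> s = (x1, B (k-1), C k)" by blast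
      then show ?thesis
      proof cases
        case (5 k)
        have q: "q (B k) = 0" "r (C k) = 0" "q (B (k-1)) = 0" "r (C (k-1)) = 0" using QR 5 by auto
        have "p (\<alpha>(5*k-4)) = 0" using e1[OF 5(1,2)] q by simp
        moreover have "p (\<alpha>(5*k-1)) = 0" using e4[OF 5(1,2)] q by simp
        moreover have "q (\<alpha>(5*k)) = 0" using e2[OF 5(1,2)] q calculation by simp
        ultimately show ?thesis using 5(3) q px by auto
      qed (use pdn q0 r0 px py1 in auto)
    qed
    have tin: "t \<in> fst ` ?S \<times> (fst \<circ> snd) ` ?S \<times> (snd \<circ> snd) ` ?S" using T t(1) by blast
    hence "fst t \<in> fst ` ?S" "fst (snd t) \<in> (fst \<circ> snd) ` ?S" "snd (snd t) \<in> (snd \<circ> snd) ` ?S"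
      by (simp_all only: mem_Times_iff)
    then obtain s1 s2 s3 where s: "s1 \<in> ?S" "s2 \<in> ?S" "s3 \<in> ?S" "fst t = fst s1"
      "fst (snd t) = fst (snd s2)" "snd (snd t) = snd (snd s3)" unfolding image_iff o_def by blast
    have "p (fst t) = 0" "q (fst (snd t)) = 0" "r (snd (snd t)) = 0"
      using allz[OF s(1)] allz[OF s(2)] allz[OF s(3)] s by simp_all
    moreover have "p (fst t) + q (fst (snd t)) + r (snd (snd t)) = (u1 (fst t) + u2 (fst (snd t)) + u3 (snd (snd t))) - (u1 x1+u2 x2+u3 x3)"
      by (simp add: p_def q_def r_def algebra_simps)
    ultimately have "u1 (fst t) + u2 (fst (snd t)) + u3 (snd (snd t)) = 0" using a1 by simp
    with one show False by simp
  qed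
qed
end
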